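(* Let $\mathcal{O}$ be the fixed one-counter net described in the context and let the formulas $\varphi_i$ ($i\ge1$) be as defined there. Then for all $n\ge0$ and $i\ge1$: (1) $(t,n)\models\varphi_i$ if and only if $2^i$ divides $n$; (2) $(\bar t,n)\models\varphi_i$ if and only if $2^i$ does not divide $n$.
   Context: A one-counter net is a tuple $(Q,\{Q_p\},\delta_0,\delta_{>0})$ with $\delta_0\subseteq Q\times\{0,1\}\times Q$, $\delta_{>0}\subseteq Q\times\{-1,0,1\}\times Q$ and $\delta_0\subseteq\delta_{>0}$; its transition system has states $Q\times\mathbb{N}$, $(q,n)$ satisfies $p$ iff $q\in Q_p$, and $(q,n)\to(q',n+k)$ iff either $n=0$ and $(q,k,q')\in\delta_0$, or $n>0$ and $(q,k,q')\in\delta_{>0}$. The fixed net $\mathcal{O}$ has control locations $t,\bar t,q_0,q_1,q_2,q_3,f,g,p_0,p_1$; the atomic propositions are the control locations, each holding exactly at itself. $\delta_{>0}$ consists of $(q_0,-1,q_1)$, $(q_1,-1,q_2)$, $(q_2,-1,q_3)$, $(q_3,-1,q_0)$, $(q_1,-1,q_1)$, $(q_3,-1,q_3)$, $(q_0,0,t)$, $(t,0,q_0)$, $(q_2,0,t)$, $(q_1,0,\bar t)$, $(\bar t,0,q_1)$, $(\bar t,0,q_2)$, $(q_3,0,\bar t)$, $(\bar t,0,q_3)$, $(t,0,f)$, $(\bar t,-1,f)$, $(f,-1,g)$, $(g,-1,f)$, $(\bar t,1,p_1)$, $(p_1,1,p_1)$, $(p_1,0,\bar t)$, $(p_0,0,\bar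 t)$, $(\bar t,0,p_0)$; and $\delta_0=\{(\bar t,1,p_1),(p_0,0,\bar t),(\bar t,0,p_0),(t,0,q_0),(t,0,f)\}$. $\mathsf{CTL}$ is interpreted with the standard semantics; $\exists\mathsf{F}\psi$ (written $\mathsf{EF}\psi$) abbreviates $\exists\,\mathtt{true}\,\mathsf{U}\,\psi$, and $\vee$ is defined as usual. Let $\mathrm{test}=t\vee\bar t$, $\varphi_\diamond=q_0\vee q_1\vee q_2\vee q_3$, $\varphi_1=\mathrm{test}\wedge\exists\mathsf{X}\big(f\wedge\mathsf{EF}(f\wedge\neg\exists\mathsf{X}g)\big)$, and for $i>1$: $\mu_i=\exists(\varphi_\diamond\wedge\exists\mathsf{X}\varphi_{i-1})\,\mathsf{U}\,(q_0\wedge\neg\exists\mathsf{X}q_1)$ and $\varphi_i=\mathrm{test}\wedge\exists\mathsf{X}\mu_i$. *)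

theory Defs
  imports Main
begin

text \<open>A one-counter net with control locations of type 'q and atomic propositions 'p.
  delta0 are transitions enabled at counter value 0, deltapos those enabled at positive values.\<close>
record ('q, 'p) ocn =
  props  :: "'p \<Rightarrow> 'q set"
  delta0 :: "('q \<times> int \<times> 'q) set"
  deltapos :: "('q \<times> int \<times> 'q) set"

definition ocn_wf :: "('q, 'p) ocn \<Rightarrow> bool" where
  "ocn_wf N \<longleftrightarrow> (\<forall>(q,k,q')\<in>delta0 N. k \<in> {0,1}) \<and>
                 (\<forall>(q,k,q')\<in>deltapos N. k \<in> {-1,0,1}) \<and> delta0 N \<subseteq> deltapos N"

definition ocn_step :: "('q, 'p) ocn \<Rightarrow> ('q \<times> nat) \<Rightarrow> ('q \<times> nat) \<Rightarrow> bool" where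
  "ocn_step N c c' \<longleftrightarrow>
     (\<exists>k. int (snd c') = int (snd c) + k \<and>
          ((snd c = 0 \<and> (fst c, k, fst c') \<in> delta0 N) \<or>
           (snd c > 0 \<and> (fst c, k, fst c') \<in> deltapos N)))"

datatype 'p ctl =
    TT
  | Prop 'p
  | Neg "'p ctl"
  | Conj "'p ctl" "'p ctl"
  | EXn "'p ctl"
  | EUn "'p ctl" "'p ctl"

definition Disj :: "'p ctl \<Rightarrow> 'p ctl \<Rightarrow> 'p ctl" where
  "Disj a b = Neg (Conj (Neg a) (Neg b))"

definition EF :: "'p ctl \<Rightarrow> 'p ctl" where
  "EF a = EUn TT a"

fun sat :: "('s \<Rightarrow> 's \<Rightarrow> bool) \<Rightarrow> ('p \<Rightarrow> 's set) \<Rightarrow> 's \<Rightarrow> 'p ctl \<Rightarrow> bool" where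
  "sat R L s TT = True"
| "sat R L s (Prop p) = (s \<in> L p)"
| "sat R L s (Neg a) = (\<not> sat R L s a)"
| "sat R L s (Conj a b) = (sat R L s a \<and> sat R L s b)"
| "sat R L s (EXn a) = (\<exists>s'. R s s' \<and> sat R L s' a)"
| "sat R L s (EUn a b) = (\<exists>(\<pi>::nat \<Rightarrow> 's) k. \<pi> 0 = s \<and> (\<forall>j<k. R (\<pi> j) (\<pi> (Suc j))) \<and>
                           sat R L (\<pi> k) b \<and> (\<forall>j<k. sat R L (\<pi> j) a))"

definition ocn_sat :: "('q, 'p) ocn \<Rightarrow> ('q \<times> nat) \<Rightarrow> 'p ctl \<Rightarrow> bool" where
  "ocn_sat N c a = sat (ocn_step N) (\<lambda>p. {c. fst c \<in> props N p}) c a"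

datatype loc = t | tbar | q0 | q1 | q2 | q3 | f | g | p0 | p1

definition O_pos :: "(loc \<times> int \<times> loc) set" where
  "O_pos = {(q0,-1,q1), (q1,-1,q2), (q2,-1,q3), (q3,-1,q0), (q1,-1,q1), (q3,-1,q3),
            (q0,0,t), (t,0,q0), (q2,0,t), (q1,0,tbar), (tbar,0,q1), (tbar,0,q2),
            (q3,0,tbar), (tbar,0,q3), (t,0,f), (tbar,-1,f), (f,-1,g), (g,-1,f),
            (tbar,1,p1), (p1,1,p1), (p1,0,tbar), (p0,0,tbar), (tbar,0,p0)}"

definition O_zero :: "(loc \<times> int \<times> loc) set" where
  "O_zero = {(tbar,1,p1), (p0,0,tbar), (tbar,0,p0), (t,0,q0), (t,0,f)}"

definition netO :: "(loc, loc) ocn" where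
  "netO = \<lparr> props = (\<lambda>p. {p}), delta0 = O_zero, deltapos = O_pos \<rparr>"

definition test :: "loc ctl" where
  "test = Disj (Prop t) (Prop tbar)"

definition phi_diamond :: "loc ctl" where
  "phi_diamond = Disj (Prop q0) (Disj (Prop q1) (Disj (Prop q2) (Prop q3)))"

text \<open>phi i for i >= 1 is the formula phi_i of the paper; phi 0 is an unused dummy.\<close>
fun phi :: "nat \<Rightarrow> loc ctl" where
  "phi 0 = Neg TT"
| "phi (Suc 0) = Conj test (EXn (Conj (Prop f) (EF (Conj (Prop f) (Neg (EXn (Prop g)))))))"
| "phi (Suc (Suc k)) = Conj test (EXn
      (EUn (Conj phi_diamond (EXn (phi (Suc k)))) (Conj (Prop q0) (Neg (EXn (Prop q1))))))"

end

theory Submission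
  imports Defs
begin

abbreviation "RR \<equiv> ocn_step netO"
abbreviation "LL \<equiv> (\<lambda>p::loc. {c::loc\<times>nat. fst c = p})"

lemma props_netO[simp]: "props netO p = {p}" by (simp add: netO_def)

lemma ocn_sat_eq: "ocn_sat netO c a = sat RR LL c a" by (simp add: ocn_sat_def)

lemma stepE: "ocn_step netO (x,m) (y,m') \<longleftrightarrow>
   (\<exists>k. int m' = int m + k \<and> ((m = 0 \<and> (x,k,y) \<in> O_zero) \<or> (m > 0 \<and> (x,k,y) \<in> O_pos)))"
  by (simp add: ocn_step_def netO_def)


lemma succ_t: "RR (t,m) (y,m') \<longleftrightarrow> (y = q0 \<and> m' = m \<or> y = f \<and> m' = m)" by (simp add: stepE O_pos_def O_zero_def conj_disj_distribL ex_disj_distrib, arith)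
lemma succ_tbar: "RR (tbar,m) (y,m') \<longleftrightarrow> (m = 0 \<and> (y = p1 \<and> m' = 1 \<or> y = p0 \<and> m' = 0)) \<or>
   (m > 0 \<and> (y = q1 \<and> m' = m \<or> y = q2 \<and> m' = m \<or> y = q3 \<and> m' = m \<or> y = f \<and> m' = m-1 \<or> y = p1 \<and> m' = m+1 \<or> y = p0 \<and> m' = m))"
  apply (simp add: stepE O_pos_def O_zero_def conj_disj_distribL ex_disj_distrib)
  apply (rule iffI)
  apply (elim disjE conjE; simp)
  apply (elim disjE conjE; simp)
  done
lemma succ_q0: "RR (q0,m) (y,m') \<longleftrightarrow> m > 0 \<and> (y = q1 \<and> m' = m-1 \<or> y = t \<and> m' = m)" by (simp add: stepE O_pos_def O_zero_def conj_disj_distribL ex_disj_distrib, arith)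
lemma succ_q1: "RR (q1,m) (y,m') \<longleftrightarrow> m > 0 \<and> (y = q2 \<and> m' = m-1 \<or> y = q1 \<and> m' = m-1 \<or> y = tbar \<and> m' = m)" by (simp add: stepE O_pos_def O_zero_def conj_disj_distribL ex_disj_distrib, arith)
lemma succ_q2: "RR (q2,m) (y,m') \<longleftrightarrow> m > 0 \<and> (y = q3 \<and> m' = m-1 \<or> y = t \<and> m' = m)" by (simp add: stepE O_pos_def O_zero_def conj_disj_distribL ex_disj_distrib, arith)
lemma succ_q3: "RR (q3,m) (y,m') \<longleftrightarrow> m > 0 \<and> (y = q0 \<and> m' = m-1 \<or> y = q3 \<and> m' = m-1 \<or> y = tbar \<and> m' = m)" by (simp add: stepE O_pos_def O_zero_def conj_disj_distribL ex_disj_distrib, arith)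
lemma succ_f: "RR (f,m) (y,m') \<longleftrightarrow> m > 0 \<and> y = g \<and> m' = m-1" by (simp add: stepE O_pos_def O_zero_def conj_disj_distribL ex_disj_distrib, arith)
lemma succ_g: "RR (g,m) (y,m') \<longleftrightarrow> m > 0 \<and> y = f \<and> m' = m-1" by (simp add: stepE O_pos_def O_zero_def conj_disj_distribL ex_disj_distrib, arith)

lemmas succs = succ_t succ_tbar succ_q0 succ_q1 succ_q2 succ_q3 succ_f succ_g

lemma EUn_base: "sat R L s b \<Longrightarrow> sat R L s (EUn a b)"
  by (simp only: sat.simps) (intro exI[of _ "\<lambda>_. s"] exI[of _ "0::nat"]; simp)

lemma EUn_step:
  assumes "sat R L s a" "R s s'" "sat R L s' (EUn a b)"
  shows "sat R L s (EUn a b)"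
proof -
  from assms(3) obtain \<pi> k where h: "\<pi> 0 = s'" "\<forall>j<k. R (\<pi> j) (\<pi> (Suc j))"
    "sat R L (\<pi> k) b" "\<forall>j<k. sat R L (\<pi> j) a" by auto
  define \<pi>' where "\<pi>' j = (if j = 0 then s else \<pi> (j-1))" for j
  have "\<forall>j<Suc k. R (\<pi>' j) (\<pi>' (Suc j))"
    using h assms by (auto simp: \<pi>'_def less_Suc_eq_0_disj)
  moreover have "\<forall>j<Suc k. sat R L (\<pi>' j) a"
    using h assms by (auto simp: \<pi>'_def less_Suc_eq_0_disj)
  moreover have "sat R L (\<pi>' (Suc k)) b" using h by (simp add: \<pi>'_def)
  moreover have "\<pi>' 0 = s" by (simp add: \<pi>'_def)
  ultimately show ?thesis by (simp only: sat.simps) blast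
qed

lemma EUn_induct:
  assumes "sat R L s (EUn a b)"
    and base: "\<And>s. sat R L s b \<Longrightarrow> P s"
    and step: "\<And>s s'. sat R L s a \<Longrightarrow> R s s' \<Longrightarrow> P s' \<Longrightarrow> P s"
  shows "P s"
proof -
  from assms(1) obtain \<pi> k where h: "\<pi> 0 = s" "\<forall>j<k. R (\<pi> j) (\<pi> (Suc j))"
    "sat R L (\<pi> k) b" "\<forall>j<k. sat R L (\<pi> j) a" by auto
  have "\<forall>\<pi>. (\<forall>j<k. R (\<pi> j) (\<pi> (Suc j))) \<longrightarrow> sat R L (\<pi> k) b \<longrightarrow> (\<forall>j<k. sat R L (\<pi> j) a) \<longrightarrow> P (\<pi> 0)"
  proof (induction k)
    case 0 then show ?case using base by auto
  next
    case (Suc k)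
    show ?case
    proof (intro allI impI)
      fix \<pi> assume h1: "\<forall>j<Suc k. R (\<pi> j) (\<pi> (Suc j))" and h2: "sat R L (\<pi> (Suc k)) b"
        and h3: "\<forall>j<Suc k. sat R L (\<pi> j) a"
      have "P ((\<lambda>j. \<pi> (Suc j)) 0)" using Suc.IH[rule_format, of "\<lambda>j. \<pi> (Suc j)"] h1 h2 h3 by auto
      then show "P (\<pi> 0)" using step h1 h3 by auto
    qed
  qed
  then show ?thesis using h by auto
qed

lemma sat_test: "sat RR LL (x,m) test \<longleftrightarrow> x = t \<or> x = tbar"
  by (auto simp: test_def Disj_def)

lemma phi_other: "i \<ge> 1 \<Longrightarrow> x \<noteq> t \<Longrightarrow> x \<noteq> tbar \<Longrightarrow> \<not> sat RR LL (x,m) (phi i)"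
  apply (cases i, simp)
  subgoal for k by (cases k) (auto simp: sat_test simp del: sat.simps(6))
  done

definition "ff = Conj (Prop f) (Neg (EXn (Prop g)))"

lemma EF_f_fwd: "sat RR LL s (EF ff) \<Longrightarrow> (fst s = f \<longrightarrow> even (snd s)) \<and> (fst s = g \<longrightarrow> odd (snd s))"
  unfolding EF_def
proof (erule EUn_induct)
  fix s assume "sat RR LL s ff"
  then show "(fst s = f \<longrightarrow> even (snd s)) \<and> (fst s = g \<longrightarrow> odd (snd s))"
    by (cases s) (auto simp: ff_def split_paired_Ex succs)
next
  fix s s' :: "loc \<times> nat"
  assume "RR s s'" "(fst s' = f \<longrightarrow> even (snd s')) \<and> (fst s' = g \<longrightarrow> odd (snd s'))"
  then show "(fst s = f \<longrightarrow> even (snd s)) \<and> (fst s = g \<longrightarrow> odd (snd s))"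
    by (cases s; cases s') (auto simp: succs)
qed

lemma EF_f_bwd: "sat RR LL (f, 2*k) (EF ff)"
proof (induction k)
  case 0 show ?case unfolding EF_def by (rule EUn_base) (auto simp: ff_def split_paired_Ex succs)
next
  case (Suc k)
  have "sat RR LL (g, Suc (2*k)) (EF ff)"
    unfolding EF_def by (rule EUn_step[OF _ _ Suc[unfolded EF_def]]) (auto simp: succs)
  then show ?case
    unfolding EF_def by (rule EUn_step[rotated 2]) (auto simp: succs)
qed

lemma EF_f: "sat RR LL (f, m) (EF ff) \<longleftrightarrow> even m"
  using EF_f_fwd[of "(f,m)"] EF_f_bwd[of "m div 2"] by auto

lemma phi1: "(sat RR LL (t,n) (phi 1) \<longleftrightarrow> 2 dvd n) \<and> (sat RR LL (tbar,n) (phi 1) \<longleftrightarrow> \<not> 2 dvd n)"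
  by (auto simp: sat_test ff_def[symmetric] split_paired_Ex succs EF_f simp del: sat.simps(6); presburger)

definition "mu i = EUn (Conj phi_diamond (EXn (phi i))) (Conj (Prop q0) (Neg (EXn (Prop q1))))"

lemma phi_SS: "phi (Suc (Suc k)) = Conj test (EXn (mu (Suc k)))" by (simp add: mu_def)

definition lof :: "nat \<Rightarrow> nat \<Rightarrow> loc" where
  "lof d m = (let r = m mod (2*d) in if r = 0 then q0 else if r < d then q3 else if r = d then q2 else q1)"

lemma dvd_r: fixes d m :: nat assumes d: "0 < d" shows "d dvd m \<longleftrightarrow> (m mod (2*d) = 0 \<or> m mod (2*d) = d)"
proof -
  have "d dvd m \<longleftrightarrow> d dvd m mod (2*d)" by (simp add: dvd_mod_iff)
  also have "\<dots> \<longleftrightarrow> (m mod (2*d) = 0 \<or> m mod (2*d) = d)"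
  proof
    assume "d dvd m mod (2*d)" then obtain c where c: "m mod (2*d) = d*c" by blast
    have "m mod (2*d) < 2*d" using d by simp
    with c have "d*c < d*2" by simp
    then have "c < 2" using mult_less_cancel1 by blast
    then have "c = 0 \<or> c = 1" by auto
    with c show "m mod (2*d) = 0 \<or> m mod (2*d) = d" by auto
  next
    assume "m mod (2*d) = 0 \<or> m mod (2*d) = d" then show "d dvd m mod (2*d)" by auto
  qed
  finally show ?thesis .
qed

lemma mod_pred: "0 < (m::nat) \<Longrightarrow> 0 < D \<Longrightarrow> (m-1) mod D = (if m mod D = 0 then D - 1 else m mod D - 1)"
  by (cases m) (auto simp: mod_Suc)

lemma sat_diamond: "sat RR LL (x,m) phi_diamond \<longleftrightarrow> x \<in> {q0,q1,q2,q3}"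
  by (auto simp: phi_diamond_def Disj_def)

lemma ex_phi:
  assumes i: "i \<ge> 1"
    and IH: "\<And>m. (sat RR LL (t,m) (phi i) \<longleftrightarrow> 2^i dvd m) \<and> (sat RR LL (tbar,m) (phi i) \<longleftrightarrow> \<not> 2^i dvd m)"
    and x: "x \<in> {q0,q1,q2,q3}"
  shows "sat RR LL (x,m) (EXn (phi i)) \<longleftrightarrow> 0 < m \<and> (if x = q0 \<or> x = q2 then 2^i dvd m else \<not> 2^i dvd m)"
  using IH phi_other[OF i] x by (auto simp: split_paired_Ex succs conj_disj_distribR ex_disj_distrib)

lemma d_ge2: "i \<ge> 1 \<Longrightarrow> (2::nat) \<le> 2^i"
  using power_increasing[of 1 i "2::nat"] by simp

lemma lofs:
  "lof d m = q0 \<longleftrightarrow> m mod (2*d) = 0"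
  "lof d m = q3 \<longleftrightarrow> m mod (2*d) \<noteq> 0 \<and> m mod (2*d) < d"
  "lof d m = q2 \<longleftrightarrow> m mod (2*d) \<noteq> 0 \<and> m mod (2*d) = d"
  "lof d m = q1 \<longleftrightarrow> m mod (2*d) \<noteq> 0 \<and> d < m mod (2*d)"
  "lof d m \<noteq> t" "lof d m \<noteq> tbar" "lof d m \<noteq> f" "lof d m \<noteq> g" "lof d m \<noteq> p0" "lof d m \<noteq> p1"
  by (auto simp: lof_def Let_def)

lemma lofs': 
  "q0 = lof d m \<longleftrightarrow> m mod (2*d) = 0"
  "q3 = lof d m \<longleftrightarrow> m mod (2*d) \<noteq> 0 \<and> m mod (2*d) < d"
  "q2 = lof d m \<longleftrightarrow> m mod (2*d) \<noteq> 0 \<and> m mod (2*d) = d"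
  "q1 = lof d m \<longleftrightarrow> m mod (2*d) \<noteq> 0 \<and> d < m mod (2*d)"
  using lofs[of d m] by metis+

lemma fwd_arith:
  fixes d r r' :: nat
  assumes "2 \<le> d" "r < 2*d" "r' = (if r = 0 then 2*d-1 else r-1)"
  shows "(r=0 \<or> r=d) \<Longrightarrow> r'\<noteq>0 \<and> d<r' \<Longrightarrow> r = 0"
    "\<not>(r=0 \<or> r=d) \<Longrightarrow> (r'\<noteq>0 \<and> d<r') \<or> (r'\<noteq>0 \<and> r'=d) \<Longrightarrow> r\<noteq>0 \<and> d<r"
    "(r=0 \<or> r=d) \<Longrightarrow> r'\<noteq>0 \<and> r'<d \<Longrightarrow> r\<noteq>0 \<and> r=d"
    "\<not>(r=0\<or>r=d) \<Longrightarrow> (r'\<noteq>0 \<and> r'<d) \<or> r'=0 \<Longrightarrow> r\<noteq>0 \<and> r<d"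
  using assms by (cases "r=0"; simp; linarith)+

lemma mu_fwd:
  assumes i: "i \<ge> 1"
    and IH: "\<And>m. (sat RR LL (t,m) (phi i) \<longleftrightarrow> 2^i dvd m) \<and> (sat RR LL (tbar,m) (phi i) \<longleftrightarrow> \<not> 2^i dvd m)"
    and h: "sat RR LL s (mu i)"
  shows "fst s \<in> {q0,q1,q2,q3} \<and> lof (2^i) (snd s) = fst s"
proof (rule EUn_induct[OF h[unfolded mu_def]])
  fix s assume "sat RR LL s (Conj (Prop q0) (Neg (EXn (Prop q1))))"
  then show "fst s \<in> {q0,q1,q2,q3} \<and> lof (2^i) (snd s) = fst s"
    by (cases s) (auto simp: split_paired_Ex succs lofs)
next
  fix s s' :: "loc \<times> nat"
  assume a: "sat RR LL s (Conj phi_diamond (EXn (phi i)))" and R: "RR s s'"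
    and P: "fst s' \<in> {q0,q1,q2,q3} \<and> lof (2^i) (snd s') = fst s'"
  obtain x m where s: "s = (x,m)" by (cases s)
  obtain y m' where s': "s' = (y,m')" by (cases s')
  define d where "d = (2::nat)^i"
  have d2: "2 \<le> d" using d_ge2[OF i] by (simp add: d_def)
  have x: "x \<in> {q0,q1,q2,q3}" using a s by (simp add: sat_diamond)
  have ex: "0 < m \<and> (if x = q0 \<or> x = q2 then d dvd m else \<not> d dvd m)"
    using a s ex_phi[OF i IH x] by (simp add: d_def)
  obtain r where rr: "m mod (2*d) = r" by blast
  obtain r' where rr': "(m-1) mod (2*d) = r'" by blast
  have mp: "r' = (if r = 0 then 2*d - 1 else r - 1)"
    unfolding rr[symmetric] rr'[symmetric] using mod_pred[of m "2*d"] ex d2 by simp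
  have dv: "d dvd m \<longleftrightarrow> (r = 0 \<or> r = d)" using dvd_r[of d m] d2 rr by simp
  have lt: "r < 2*d" using d2 rr by auto
  note A = fwd_arith[OF d2 lt mp]
  have y: "y \<in> {q0,q1,q2,q3}" "lof d m' = y" using P s' by (auto simp: d_def)
  have R': "RR (x,m) (y,m')" using R s s' by simp
  have L0: "lof d m = q0 \<longleftrightarrow> r = 0" "lof d m = q1 \<longleftrightarrow> r\<noteq>0 \<and> d<r"
     "lof d m = q2 \<longleftrightarrow> r\<noteq>0 \<and> r=d" "lof d m = q3 \<longleftrightarrow> r\<noteq>0 \<and> r<d"
    using lofs[of d m] rr by auto
  have L1: "lof d (m-1) = q0 \<longleftrightarrow> r' = 0" "lof d (m-1) = q1 \<longleftrightarrow> r'\<noteq>0 \<and> d<r'"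
     "lof d (m-1) = q2 \<longleftrightarrow> r'\<noteq>0 \<and> r'=d" "lof d (m-1) = q3 \<longleftrightarrow> r'\<noteq>0 \<and> r'<d"
    using lofs[of d "m-1"] rr' by auto
  have "lof d m = x"
  proof -
    consider "x=q0" | "x=q1" | "x=q2" | "x=q3" using x by auto
    then show ?thesis
    proof cases
      case 1
      with R' y(1) have "y = q1" "m' = m-1" by (auto simp: succ_q0)
      with y(2) 1 ex have "lof d (m-1) = q1" "d dvd m" by auto
      then have "r=0 \<or> r=d" "r'\<noteq>0 \<and> d<r'" using dv L1 by simp_all
      then have "r = 0" by (rule A(1))
      then show ?thesis by (simp add: 1 L0)
    next
      case 2
      with R' y(1) have "y = q1 \<or> y = q2" "m' = m-1" by (auto simp: succ_q1)
      with y(2) 2 ex have "lof d (m-1) = q1 \<or> lof d (m-1) = q2" "\<not> d dvd m" by auto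
      then have "\<not>(r=0 \<or> r=d)" "(r'\<noteq>0 \<and> d<r') \<or> (r'\<noteq>0 \<and> r'=d)" using dv L1 by simp_all
      then have "r\<noteq>0 \<and> d<r" by (rule A(2))
      then show ?thesis by (simp add: 2 L0)
    next
      case 3
      with R' y(1) have "y = q3" "m' = m-1" by (auto simp: succ_q2)
      with y(2) 3 ex have "lof d (m-1) = q3" "d dvd m" by auto
      then have "r=0 \<or> r=d" "r'\<noteq>0 \<and> r'<d" using dv L1 by simp_all
      then have "r\<noteq>0 \<and> r=d" by (rule A(3))
      then show ?thesis by (simp add: 3 L0)
    next
      case 4
      with R' y(1) have "y = q3 \<or> y = q0" "m' = m-1" by (auto simp: succ_q3)
      with y(2) 4 ex have "lof d (m-1) = q3 \<or> lof d (m-1) = q0" "\<not> d dvd m" by auto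
      then have "\<not>(r=0 \<or> r=d)" "(r'\<noteq>0 \<and> r'<d) \<or> r'=0" using dv L1 by simp_all
      then have "r\<noteq>0 \<and> r<d" by (rule A(4))
      then show ?thesis by (simp add: 4 L0)
    qed
  qed
  then show "fst s \<in> {q0,q1,q2,q3} \<and> lof (2^i) (snd s) = fst s" using s x by (simp add: d_def)
qed


lemma mu_bwd:
  assumes i: "i \<ge> 1"
    and IH: "\<And>m. (sat RR LL (t,m) (phi i) \<longleftrightarrow> 2^i dvd m) \<and> (sat RR LL (tbar,m) (phi i) \<longleftrightarrow> \<not> 2^i dvd m)"
  shows "sat RR LL (lof (2^i) m, m) (mu i)"
proof (induction m)
  case 0
  have "lof (2^i) 0 = q0" by (simp add: lofs)
  moreover have "sat RR LL (q0, 0) (mu i)" unfolding mu_def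
    by (rule EUn_base) (simp add: split_paired_Ex succs)
  ultimately show ?case by simp
next
  case (Suc m)
  define d where "d = (2::nat)^i"
  have d2: "2 \<le> d" using d_ge2[OF i] by (simp add: d_def)
  define x where "x = lof d (Suc m)"
  obtain r where rr: "Suc m mod (2*d) = r" by blast
  obtain r' where rr': "m mod (2*d) = r'" by blast
  have mp: "r' = (if r = 0 then 2*d - 1 else r - 1)"
    unfolding rr[symmetric] rr'[symmetric] using mod_pred[of "Suc m" "2*d"] d2 by simp
  have dv: "d dvd Suc m \<longleftrightarrow> (r = 0 \<or> r = d)" using dvd_r[of d "Suc m"] d2 rr by simp
  have lt: "r < 2*d" using d2 rr by auto
  have L0: "lof d (Suc m) = q0 \<longleftrightarrow> r = 0" "lof d (Suc m) = q1 \<longleftrightarrow> r\<noteq>0 \<and> d<r"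
     "lof d (Suc m) = q2 \<longleftrightarrow> r\<noteq>0 \<and> r=d" "lof d (Suc m) = q3 \<longleftrightarrow> r\<noteq>0 \<and> r<d"
    using lofs[of d "Suc m"] rr by auto
  have L1: "lof d m = q0 \<longleftrightarrow> r' = 0" "lof d m = q1 \<longleftrightarrow> r'\<noteq>0 \<and> d<r'"
     "lof d m = q2 \<longleftrightarrow> r'\<noteq>0 \<and> r'=d" "lof d m = q3 \<longleftrightarrow> r'\<noteq>0 \<and> r'<d"
    using lofs[of d m] rr' by auto
  have x: "x \<in> {q0,q1,q2,q3}" by (simp add: x_def lof_def Let_def)
  have exs: "sat RR LL (x, Suc m) (EXn (phi i)) \<longleftrightarrow> (if x = q0 \<or> x = q2 then d dvd Suc m else \<not> d dvd Suc m)"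
    using ex_phi[OF i IH x, of "Suc m"] by (simp add: d_def)
  have key: "sat RR LL (x, Suc m) (EXn (phi i)) \<and> RR (x, Suc m) (lof d m, m)"
  proof (cases "r = 0")
    case True
    then have "x = q0" "lof d m = q1" "d dvd Suc m" using L0 L1 mp d2 dv by (auto simp: x_def)
    then show ?thesis using exs by (simp add: succs)
  next
    case False
    show ?thesis
    proof (cases "r < d")
      case True
      then have "x = q3" "lof d m = q3 \<or> lof d m = q0" "\<not> d dvd Suc m"
        using \<open>r \<noteq> 0\<close> L0 L1 mp d2 dv by (auto simp: x_def)
      then show ?thesis using exs by (auto simp: succs)
    next
      case False
      show ?thesis
      proof (cases "r = d")
        case True
        then have "x = q2" "lof d m = q3" "d dvd Suc m"
          using \<open>r \<noteq> 0\<close> L0 L1 mp d2 dv by (auto simp: x_def)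
        then show ?thesis using exs by (auto simp: succs)
      next
        case False
        then have "x = q1" "lof d m = q1 \<or> lof d m = q2" "\<not> d dvd Suc m"
          using \<open>r \<noteq> 0\<close> \<open>\<not> r < d\<close> L0 L1 mp d2 dv by (auto simp: x_def)
        then show ?thesis using exs by (auto simp: succs)
      qed
    qed
  qed
  have a: "sat RR LL (x, Suc m) (Conj phi_diamond (EXn (phi i)))"
    using key x by (simp add: sat_diamond)
  have IH': "sat RR LL (lof d m, m) (mu i)" using Suc by (simp add: d_def)
  have "sat RR LL (x, Suc m) (mu i)"
    using EUn_step[OF a conjunct2[OF key] IH'[unfolded mu_def]] by (simp add: mu_def)
  then show ?case by (simp add: x_def d_def)
qed

lemma mu_char:
  assumes i: "i \<ge> 1"
    and IH: "\<And>m. (sat RR LL (t,m) (phi i) \<longleftrightarrow> 2^i dvd m) \<and> (sat RR LL (tbar,m) (phi i) \<longleftrightarrow> \<not> 2^i dvd m)"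
  shows "sat RR LL (x,m) (mu i) \<longleftrightarrow> x \<in> {q0,q1,q2,q3} \<and> lof (2^i) m = x"
  using mu_fwd[OF i IH, of "(x,m)"] mu_bwd[OF i IH, of m] by auto

lemma main: "i \<ge> 1 \<Longrightarrow> \<forall>n. (sat RR LL (t,n) (phi i) \<longleftrightarrow> 2^i dvd n) \<and> (sat RR LL (tbar,n) (phi i) \<longleftrightarrow> \<not> 2^i dvd n)"
proof (induction i rule: nat_induct_at_least)
  case base
  then show ?case using phi1 by simp
next
  case (Suc i)
  then obtain k where k: "i = Suc k" by (cases i) auto
  define d where "d = (2::nat)^i"
  have d2: "2 \<le> d" using d_ge2[OF Suc(1)] by (simp add: d_def)
  have mc: "\<And>x m. sat RR LL (x,m) (mu i) \<longleftrightarrow> x \<in> {q0,q1,q2,q3} \<and> lof d m = x"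
    using mu_char[OF Suc(1)] Suc(2) by (simp add: d_def)
  have phiS: "phi (Suc i) = Conj test (EXn (mu i))" using phi_SS[of k] k by simp
  show ?case
  proof
    fix n
    obtain r where rr: "n mod (2*d) = r" by blast
    have dd: "2^Suc i dvd n \<longleftrightarrow> r = 0" using rr by (simp add: d_def dvd_eq_mod_eq_0 mult.commute)
    have L0: "lof d n = q0 \<longleftrightarrow> r = 0" "lof d n = q1 \<longleftrightarrow> r\<noteq>0 \<and> d<r"
       "lof d n = q2 \<longleftrightarrow> r\<noteq>0 \<and> r=d" "lof d n = q3 \<longleftrightarrow> r\<noteq>0 \<and> r<d"
      using lofs[of d n] rr by auto
    have T: "sat RR LL (t,n) (phi (Suc i)) \<longleftrightarrow> lof d n = q0"
      unfolding phiS by (simp add: sat_test split_paired_Ex succs conj_disj_distribR ex_disj_distrib mc)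
    have B: "sat RR LL (tbar,n) (phi (Suc i)) \<longleftrightarrow> 0 < n \<and> (lof d n = q1 \<or> lof d n = q2 \<or> lof d n = q3)"
      unfolding phiS by (simp add: sat_test split_paired_Ex succs conj_disj_distribR ex_disj_distrib mc)
    have "n = 0 \<Longrightarrow> r = 0" using rr by simp
    then show "(sat RR LL (t,n) (phi (Suc i)) \<longleftrightarrow> 2^Suc i dvd n) \<and> (sat RR LL (tbar,n) (phi (Suc i)) \<longleftrightarrow> \<not> 2^Suc i dvd n)"
      unfolding T B dd L0 by auto
  qed
qed

theorem lemma1:
  fixes n i :: nat
  assumes "i \<ge> 1"
  shows "(ocn_sat netO (t, n) (phi i) \<longleftrightarrow> 2 ^ i dvd n) \<and>
         (ocn_sat netO (tbar, n) (phi i) \<longleftrightarrow> \<not> 2 ^ i dvd n)"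
  using main[OF assms] by (simp add: ocn_sat_eq)

end
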